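(* Let $r,s,t$ be nonzero reals and $\lambda=(\lambda_k)_{k\ge0}$ a strictly increasing sequence of positive reals with $\lambda_k\to\infty$. For $a=(a_n)\in\omega$ and $k<n$ let $$\widehat g_k(n)=\lambda_k\left(\frac{1}{\lambda_k-\lambda_{k-1}}\sum_{j=k}^n d_{jk}a_j-\frac{1}{\lambda_{k+1}-\lambda_k}\sum_{j=k+1}^n d_{j,k+1}a_j\right),$$ and for $1\le q<\infty$ let $f_3^\lambda=\{a\in\omega:\sup_{n}\sum_{k=0}^{n-1}|\widehat g_k(n)|^q<\infty\}$ and $f_4^\lambda=\{a\in\omega:\sup_{n}\left|\frac1r\frac{\lambda_n}{\lambda_n-\lambda_{n-1}}a_n\right|<\infty\}$. Then (i) $\{c_0^\lambda(\widehat B)\}^\gamma=\{c^\lambda(\widehat B)\}^\gamma=\{\ell_\infty^\lambda(\widehat B)\}^\gamma=f_3^\lambda\cap f_4^\lambda$ with $q=1$; (ii) if $1<p<\infty$ and $\frac1p+\frac1q=1$, then $\{\ell_p^\lambda(\widehat B)\}^\gamma=f_3^\lambda\cap f_4^\lambda$.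
   Context: $\omega$: all complex sequences indexed by $\mathbb{N}=\{0,1,\dots\}$. Convention: terms with negative subscript are $0$. $D=(d_{nk})$ is the inverse of the lower triangular matrix $B(r,s,t)$ having $r$ on the diagonal, $s$ on the first subdiagonal, $t$ on the second subdiagonal and zeros elsewhere; explicitly $d_{nk}=\frac1r\sum_{v=0}^{n-k}\rho_1^{\,n-k-v}\rho_2^{\,v}$ ($0\le k\le n$), $d_{nk}=0$ ($k>n$), $\rho_{1,2}=\frac{-s\pm\sqrt{s^2-4tr}}{2r}$. With $\widehat W_n(x)=\frac{1}{\lambda_n}\sum_{k=0}^n(\lambda_k-\lambda_{k-1})(rx_k+sx_{k-1}+tx_{k-2})$, for $\mu\in\{c_0,c,\ell_\infty,\ell_p\}$ set $\mu^\lambda(\widehat B)=\{x\in\omega:(\widehat W_n(x))_n\in\mu\}$. The $\gamma$-dual of a sequence space $X$ is $X^\gamma=\{a\in\omega:\sup_n|\sum_{k=0}^n a_kx_k|<\infty\text{ for all }x\in X\}$. *)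

theory Defs
  imports "HOL-Analysis.Analysis"
begin

text \<open>Convention: terms with negative subscript are 0.
  \<open>lam_prev lam k\<close> is \<open>\<lambda>_{k-1}\<close> (with \<open>\<lambda>_{-1} = 0\<close>);
  \<open>shft x j k\<close> is \<open>x_{k-j}\<close> (with \<open>x_m = 0\<close> for \<open>m < 0\<close>).\<close>

definition lam_prev :: "(nat \<Rightarrow> real) \<Rightarrow> nat \<Rightarrow> real" where
  "lam_prev lam k = (if k = 0 then 0 else lam (k - 1))"

definition shft :: "(nat \<Rightarrow> complex) \<Rightarrow> nat \<Rightarrow> nat \<Rightarrow> complex" where
  "shft x j k = (if j \<le> k then x (k - j) else 0)"

definition rho1 :: "real \<Rightarrow> real \<Rightarrow> real \<Rightarrow> complex" where
  "rho1 r s t = (- complex_of_real s + csqrt (complex_of_real (s^2 - 4*t*r))) / complex_of_real (2*r)"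

definition rho2 :: "real \<Rightarrow> real \<Rightarrow> real \<Rightarrow> complex" where
  "rho2 r s t = (- complex_of_real s - csqrt (complex_of_real (s^2 - 4*t*r))) / complex_of_real (2*r)"

text \<open>Entries of \<open>D = B(r,s,t)^{-1}\<close>.\<close>

definition dmat :: "real \<Rightarrow> real \<Rightarrow> real \<Rightarrow> nat \<Rightarrow> nat \<Rightarrow> complex" where
  "dmat r s t n k = (if k \<le> n then
     (1 / complex_of_real r) * (\<Sum>v = 0..n - k. rho1 r s t ^ (n - k - v) * rho2 r s t ^ v)
   else 0)"

definition What :: "real \<Rightarrow> real \<Rightarrow> real \<Rightarrow> (nat \<Rightarrow> real) \<Rightarrow> (nat \<Rightarrow> complex) \<Rightarrow> nat \<Rightarrow> complex" where
  "What r s t lam x n = complex_of_real (1 / lam n) *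
     (\<Sum>k\<le>n. complex_of_real (lam k - lam_prev lam k) *
        (complex_of_real r * x k + complex_of_real s * shft x 1 k + complex_of_real t * shft x 2 k))"

definition c0_seq :: "(nat \<Rightarrow> complex) set" where
  "c0_seq = {x. x \<longlonglongrightarrow> 0}"

definition c_seq :: "(nat \<Rightarrow> complex) set" where
  "c_seq = {x. convergent x}"

definition linf_seq :: "(nat \<Rightarrow> complex) set" where
  "linf_seq = {x. Bseq x}"

definition lp_seq :: "real \<Rightarrow> (nat \<Rightarrow> complex) set" where
  "lp_seq p = {x. summable (\<lambda>n. norm (x n) powr p)}"

definition lam_space :: "real \<Rightarrow> real \<Rightarrow> real \<Rightarrow> (nat \<Rightarrow> real) \<Rightarrow> (nat \<Rightarrow> complex) set \<Rightarrow> (nat \<Rightarrow> complex) set" where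
  "lam_space r s t lam \<mu> = {x. What r s t lam x \<in> \<mu>}"

definition gamma_dual :: "(nat \<Rightarrow> complex) set \<Rightarrow> (nat \<Rightarrow> complex) set" where
  "gamma_dual X = {a. \<forall>x\<in>X. Bseq (\<lambda>n. \<Sum>k\<le>n. a k * x k)}"

definition ghat :: "real \<Rightarrow> real \<Rightarrow> real \<Rightarrow> (nat \<Rightarrow> real) \<Rightarrow> (nat \<Rightarrow> complex) \<Rightarrow> nat \<Rightarrow> nat \<Rightarrow> complex" where
  "ghat r s t lam a k n = complex_of_real (lam k) *
     (complex_of_real (1 / (lam k - lam_prev lam k)) * (\<Sum>j = k..n. dmat r s t j k * a j)
      - complex_of_real (1 / (lam (k+1) - lam k)) * (\<Sum>j = k+1..n. dmat r s t j (k+1) * a j))"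

definition f3 :: "real \<Rightarrow> real \<Rightarrow> real \<Rightarrow> (nat \<Rightarrow> real) \<Rightarrow> real \<Rightarrow> (nat \<Rightarrow> complex) set" where
  "f3 r s t lam q = {a. bdd_above (range (\<lambda>n. \<Sum>k<n. norm (ghat r s t lam a k n) powr q))}"

definition f4 :: "real \<Rightarrow> (nat \<Rightarrow> real) \<Rightarrow> (nat \<Rightarrow> complex) set" where
  "f4 r lam = {a. Bseq (\<lambda>n. complex_of_real (1 / r * (lam n / (lam n - lam_prev lam n))) * a n)}"

end

theory Submission
  imports Defs
begin

definition hh :: "real \<Rightarrow> real \<Rightarrow> real \<Rightarrow> nat \<Rightarrow> complex" where
  "hh r s t l = (\<Sum>v = 0..l. rho1 r s t ^ (l - v) * rho2 r s t ^ v)"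

lemma hh_Suc: "hh r s t (Suc l) = rho1 r s t * hh r s t l + rho2 r s t ^ Suc l"
proof -
  have "hh r s t (Suc l) = (\<Sum>v = 0..l. rho1 r s t ^ (Suc l - v) * rho2 r s t ^ v) + rho2 r s t ^ Suc l"
    unfolding hh_def by (simp add: sum.atLeast0_atMost_Suc)
  also have "(\<Sum>v = 0..l. rho1 r s t ^ (Suc l - v) * rho2 r s t ^ v) = rho1 r s t * hh r s t l"
    unfolding hh_def sum_distrib_left
    by (rule sum.cong) (auto simp: Suc_diff_le mult.assoc)
  finally show ?thesis .
qed

lemma hh_0 [simp]: "hh r s t 0 = 1" by (simp add: hh_def)

lemma rho_sum: "r \<noteq> 0 \<Longrightarrow> rho1 r s t + rho2 r s t = - complex_of_real s / complex_of_real r"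
  unfolding rho1_def rho2_def by (simp add: field_simps)

lemma rho_prod: "r \<noteq> 0 \<Longrightarrow> rho1 r s t * rho2 r s t = complex_of_real t / complex_of_real r"
proof -
  assume r: "r \<noteq> 0"
  let ?w = "csqrt (complex_of_real (s^2 - 4*t*r))"
  have w2: "?w ^ 2 = complex_of_real (s^2 - 4*t*r)" by simp
  have "rho1 r s t * rho2 r s t = ((complex_of_real s)^2 - ?w^2) / (complex_of_real (2*r))^2"
    unfolding rho1_def rho2_def by (simp add: field_simps power2_eq_square)
  also have "\<dots> = complex_of_real t / complex_of_real r"
    using r unfolding w2 by (simp add: field_simps power2_eq_square)
  finally show ?thesis .
qed

lemma hh_rec: assumes r: "r \<noteq> 0"
  shows "complex_of_real r * hh r s t (Suc (Suc l)) + complex_of_real s * hh r s t (Suc l)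
           + complex_of_real t * hh r s t l = 0"
proof -
  let ?a = "rho1 r s t" and ?b = "rho2 r s t"
  have e: "hh r s t (Suc (Suc l)) = (?a + ?b) * hh r s t (Suc l) - ?a * ?b * hh r s t l"
    by (simp add: hh_Suc algebra_simps)
  show ?thesis unfolding e rho_sum[OF r] rho_prod[OF r] using r
    by (simp add: field_simps)
qed

lemma hh_1: assumes r: "r \<noteq> 0"
  shows "complex_of_real r * hh r s t (Suc 0) + complex_of_real s * hh r s t 0 = 0"
proof -
  have "hh r s t (Suc 0) = rho1 r s t + rho2 r s t" by (simp add: hh_Suc)
  then show ?thesis using rho_sum[OF r] r by (simp add: field_simps)
qed

lemma dmat_hh: "dmat r s t n k = (if k \<le> n then hh r s t (n - k) / complex_of_real r else 0)"
  by (simp add: dmat_def hh_def)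

lemma coef:
  assumes r: "r \<noteq> 0" and ij: "i \<le> j"
  shows "complex_of_real r * dmat r s t j i
       + complex_of_real s * (if 1 \<le> j then dmat r s t (j - 1) i else 0)
       + complex_of_real t * (if 2 \<le> j then dmat r s t (j - 2) i else 0)
       = (if i = j then 1 else 0)"
proof -
  consider "j = i" | "j = Suc i" | l where "j = Suc (Suc (i + l))"
    using ij by (metis add_Suc_right le_Suc_ex not0_implies_Suc nat.exhaust add_0_right)
  then show ?thesis
  proof cases
    case 1 then show ?thesis using r by (auto simp: dmat_hh)
  next
    case 2
    then show ?thesis using r hh_1[OF r, of s t] by (auto simp: dmat_hh field_simps)
  next
    case 3
    have e1: "Suc (Suc (i + l)) - i = Suc (Suc l)" by simp
    have e2: "Suc (i + l) - i = Suc l" by simp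
    show ?thesis using 3 r hh_rec[OF r, of s t l]
      by (simp add: dmat_hh e1 e2 field_simps)
  qed
qed

definition Bop :: "real \<Rightarrow> real \<Rightarrow> real \<Rightarrow> (nat \<Rightarrow> complex) \<Rightarrow> nat \<Rightarrow> complex" where
  "Bop r s t x k = complex_of_real r * x k + complex_of_real s * shft x 1 k + complex_of_real t * shft x 2 k"

definition Dop :: "real \<Rightarrow> real \<Rightarrow> real \<Rightarrow> (nat \<Rightarrow> complex) \<Rightarrow> nat \<Rightarrow> complex" where
  "Dop r s t z j = (\<Sum>i\<le>j. dmat r s t j i * z i)"

lemma dmat_zero: "n < k \<Longrightarrow> dmat r s t n k = 0" by (simp add: dmat_def)

lemma sum_ext_zero:
  assumes "m \<le> j" "\<And>i. m < i \<Longrightarrow> i \<le> j \<Longrightarrow> f i = 0"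
  shows "(\<Sum>i\<le>(m::nat). f i) = (\<Sum>i\<le>j. (f i :: complex))"
  using assms by (intro sum.mono_neutral_left) (auto simp: not_le)

lemma shft_Dop1: "shft (Dop r s t z) 1 j = (\<Sum>i\<le>j. (if 1 \<le> j then dmat r s t (j - 1) i else 0) * z i)"
proof (cases "1 \<le> j")
  case True
  have "shft (Dop r s t z) 1 j = (\<Sum>i\<le>j - 1. dmat r s t (j - 1) i * z i)"
    using True by (simp add: shft_def Dop_def)
  also have "\<dots> = (\<Sum>i\<le>j. dmat r s t (j - 1) i * z i)"
    by (rule sum_ext_zero) (auto simp: dmat_zero)
  finally show ?thesis using True by simp
qed (simp add: shft_def)

lemma shft_Dop2: "shft (Dop r s t z) 2 j = (\<Sum>i\<le>j. (if 2 \<le> j then dmat r s t (j - 2) i else 0) * z i)"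
proof (cases "2 \<le> j")
  case True
  have "shft (Dop r s t z) 2 j = (\<Sum>i\<le>j - 2. dmat r s t (j - 2) i * z i)"
    using True by (simp add: shft_def Dop_def)
  also have "\<dots> = (\<Sum>i\<le>j. dmat r s t (j - 2) i * z i)"
    by (rule sum_ext_zero) (auto simp: dmat_zero)
  finally show ?thesis using True by simp
qed (simp add: shft_def)

lemma BD: assumes r: "r \<noteq> 0" shows "Bop r s t (Dop r s t z) = z"
proof
  fix j
  have "Bop r s t (Dop r s t z) j = (\<Sum>i\<le>j. (complex_of_real r * dmat r s t j i
       + complex_of_real s * (if 1 \<le> j then dmat r s t (j - 1) i else 0)
       + complex_of_real t * (if 2 \<le> j then dmat r s t (j - 2) i else 0)) * z i)"
    unfolding Bop_def shft_Dop1 shft_Dop2 Dop_def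
    by (simp add: sum_distrib_left sum.distrib algebra_simps)
  also have "\<dots> = (\<Sum>i\<le>j. (if i = j then z i else 0))"
    apply (rule sum.cong[OF refl])
    subgoal for i by (subst coef[OF r]) auto
    done
  also have "\<dots> = z j" by simp
  finally show "Bop r s t (Dop r s t z) j = z j" .
qed

lemma B_inj: assumes r: "r \<noteq> 0" and e: "Bop r s t x = Bop r s t w" shows "x = w"
proof
  fix j show "x j = w j"
  proof (induction j rule: less_induct)
    case (less j)
    have h1: "shft x 1 j = shft w 1 j" "shft x 2 j = shft w 2 j"
      using less by (auto simp: shft_def)
    have "Bop r s t x j = Bop r s t w j" using e by simp
    then have "complex_of_real r * x j = complex_of_real r * w j"
      unfolding Bop_def h1 by simp
    then show ?case using r by simp
  qed
qed

lemma DB: assumes r: "r \<noteq> 0" shows "Dop r s t (Bop r s t x) = x"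
  using B_inj[OF r, of s t "Dop r s t (Bop r s t x)" x] BD[OF r] by simp


definition Lam :: "(nat \<Rightarrow> real) \<Rightarrow> (nat \<Rightarrow> complex) \<Rightarrow> nat \<Rightarrow> complex" where
  "Lam lam y k = complex_of_real (1 / (lam k - lam_prev lam k)) *
     (complex_of_real (lam k) * y k - complex_of_real (lam_prev lam k) * y (k - 1))"

definition Arow :: "real \<Rightarrow> real \<Rightarrow> real \<Rightarrow> (nat \<Rightarrow> real) \<Rightarrow> (nat \<Rightarrow> complex) \<Rightarrow> nat \<Rightarrow> nat \<Rightarrow> complex" where
  "Arow r s t lam a n k = (if k < n then ghat r s t lam a k n
     else if k = n then complex_of_real (1 / r * (lam n / (lam n - lam_prev lam n))) * a n else 0)"

locale lamseq =
  fixes lam :: "nat \<Rightarrow> real"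
  assumes sm: "strict_mono lam" and pos: "\<And>k. lam k > 0"
begin

lemma delta_pos: "lam k - lam_prev lam k > 0"
proof (cases k)
  case 0 then show ?thesis using pos by (simp add: lam_prev_def)
next
  case (Suc m) then show ?thesis using sm by (simp add: lam_prev_def strict_mono_def)
qed

lemma lam_prev_Suc [simp]: "lam_prev lam (Suc k) = lam k" by (simp add: lam_prev_def)
lemma lam_prev_0 [simp]: "lam_prev lam 0 = 0" by (simp add: lam_prev_def)

lemma delta_Lam: "complex_of_real (lam k - lam_prev lam k) * Lam lam y k
   = complex_of_real (lam k) * y k - complex_of_real (lam_prev lam k) * y (k - 1)"
proof -
  have "lam k - lam_prev lam k \<noteq> 0" using delta_pos[of k] by linarith
  then show ?thesis unfolding Lam_def by (simp add: field_simps)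
qed

lemma tele: "(\<Sum>k\<le>n. complex_of_real (lam k - lam_prev lam k) * Lam lam y k) = complex_of_real (lam n) * y n"
proof (induction n)
  case 0 show ?case using delta_Lam[of 0 y] by simp
next
  case (Suc n) show ?case using Suc delta_Lam[of "Suc n" y] by (simp add: algebra_simps)
qed

lemma What_Bop: "What r s t lam x n = complex_of_real (1 / lam n) *
     (\<Sum>k\<le>n. complex_of_real (lam k - lam_prev lam k) * Bop r s t x k)"
  by (simp add: What_def Bop_def)

lemma What_Dop: assumes r: "r \<noteq> 0"
  shows "What r s t lam (Dop r s t (Lam lam y)) = y"
proof
  fix n
  have "lam n \<noteq> 0" using pos[of n] by simp
  then show "What r s t lam (Dop r s t (Lam lam y)) n = y n"
    unfolding What_Bop BD[OF r] tele by simp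
qed

lemma lam_What: "complex_of_real (lam n) * What r s t lam x n =
   (\<Sum>k\<le>n. complex_of_real (lam k - lam_prev lam k) * Bop r s t x k)"
proof -
  have "lam n \<noteq> 0" using pos[of n] by simp
  then show ?thesis unfolding What_Bop by simp
qed

lemma Lam_What: "Lam lam (What r s t lam x) = Bop r s t x"
proof
  fix k
  have d: "lam k - lam_prev lam k \<noteq> 0" using delta_pos[of k] by linarith
  have "complex_of_real (lam k - lam_prev lam k) * Lam lam (What r s t lam x) k
      = complex_of_real (lam k - lam_prev lam k) * Bop r s t x k"
  proof (cases k)
    case 0 then show ?thesis unfolding delta_Lam lam_What by simp
  next
    case (Suc m) then show ?thesis unfolding delta_Lam lam_What using lam_What[of m r s t x] by simp
  qed
  then show "Lam lam (What r s t lam x) k = Bop r s t x k" using d by simp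
qed

lemma abel: "(\<Sum>i\<le>n. b i * Lam lam y i) =
   (\<Sum>k<n. complex_of_real (lam k) * (complex_of_real (1 / (lam k - lam_prev lam k)) * b k
        - complex_of_real (1 / (lam (k+1) - lam k)) * b (k+1)) * y k)
   + complex_of_real (lam n / (lam n - lam_prev lam n)) * b n * y n"
proof (induction n)
  case 0
  have "lam 0 \<noteq> 0" using pos[of 0] by simp
  then show ?case by (simp add: Lam_def)
next
  case (Suc n)
  have e1: "complex_of_real (lam n / (lam n - lam_prev lam n)) = complex_of_real (lam n) * complex_of_real (1 / (lam n - lam_prev lam n))"
    by (simp add: divide_inverse)
  have e2: "complex_of_real (lam (Suc n) / (lam (Suc n) - lam_prev lam (Suc n))) = complex_of_real (lam (Suc n)) * complex_of_real (1 / (lam (Suc n) - lam n))"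
    by (simp add: divide_inverse)
  have e3: "Lam lam y (Suc n) = complex_of_real (1 / (lam (Suc n) - lam n)) *
     (complex_of_real (lam (Suc n)) * y (Suc n) - complex_of_real (lam n) * y n)"
    by (simp add: Lam_def)
  show ?case unfolding sum.atMost_Suc sum.lessThan_Suc Suc e1 e2 e3
    by (simp add: algebra_simps del: of_real_divide of_real_diff)
qed

lemma key: assumes r: "r \<noteq> 0"
  shows "(\<Sum>j\<le>n. a j * x j) = (\<Sum>k\<le>n. Arow r s t lam a n k * What r s t lam x k)"
proof -
  define y where "y = What r s t lam x"
  define b where "b i = (\<Sum>j = i..n. dmat r s t j i * a j)" for i
  have xD: "x = Dop r s t (Lam lam y)" unfolding y_def Lam_What DB[OF r] ..
  have "(\<Sum>j\<le>n. a j * x j) = (\<Sum>j\<le>n. \<Sum>i\<le>n. a j * dmat r s t j i * Lam lam y i)"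
  proof (rule sum.cong[OF refl])
    fix j assume "j \<in> {..n}"
    then have "(\<Sum>i\<le>j. a j * dmat r s t j i * Lam lam y i) = (\<Sum>i\<le>n. a j * dmat r s t j i * Lam lam y i)"
      by (intro sum_ext_zero) (auto simp: dmat_zero)
    then show "a j * x j = (\<Sum>i\<le>n. a j * dmat r s t j i * Lam lam y i)"
      unfolding xD Dop_def by (simp add: sum_distrib_left mult.assoc)
  qed
  also have "\<dots> = (\<Sum>i\<le>n. \<Sum>j\<le>n. a j * dmat r s t j i * Lam lam y i)"
    by (rule sum.swap)
  also have "\<dots> = (\<Sum>i\<le>n. b i * Lam lam y i)"
    unfolding b_def sum_distrib_right
  proof (rule sum.cong[OF refl])
    fix i assume i: "i \<in> {..n}"
    show "(\<Sum>j\<le>n. a j * dmat r s t j i * Lam lam y i) = (\<Sum>j = i..n. dmat r s t j i * a j * Lam lam y i)"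
      by (rule sum.mono_neutral_cong_right) (use i in \<open>auto simp: dmat_zero\<close>)
  qed
  also have "\<dots> = (\<Sum>k\<le>n. Arow r s t lam a n k * y k)"
    unfolding abel
  proof -
    have e1: "(\<Sum>k\<le>n. Arow r s t lam a n k * y k) = (\<Sum>k<n. Arow r s t lam a n k * y k) + Arow r s t lam a n n * y n"
      by (simp add: lessThan_Suc_atMost[symmetric] sum.lessThan_Suc)
    have e2: "(\<Sum>k<n. Arow r s t lam a n k * y k) = (\<Sum>k<n. complex_of_real (lam k) * (complex_of_real (1 / (lam k - lam_prev lam k)) * b k
        - complex_of_real (1 / (lam (k+1) - lam k)) * b (k+1)) * y k)"
      by (rule sum.cong) (auto simp: Arow_def ghat_def b_def)
    have e3: "b n = a n / complex_of_real r" by (simp add: b_def dmat_def)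
    show "(\<Sum>k<n. complex_of_real (lam k) * (complex_of_real (1 / (lam k - lam_prev lam k)) * b k
        - complex_of_real (1 / (lam (k+1) - lam k)) * b (k+1)) * y k)
      + complex_of_real (lam n / (lam n - lam_prev lam n)) * b n * y n = (\<Sum>k\<le>n. Arow r s t lam a n k * y k)"
      unfolding e1 e2 e3 by (simp add: Arow_def)
  qed
  finally show ?thesis unfolding y_def .
qed

lemma gd: assumes r: "r \<noteq> 0"
  shows "gamma_dual (lam_space r s t lam \<mu>) = {a. \<forall>y\<in>\<mu>. Bseq (\<lambda>n. \<Sum>k\<le>n. Arow r s t lam a n k * y k)}"
proof (intro set_eqI iffI; simp)
  fix a assume a: "a \<in> gamma_dual (lam_space r s t lam \<mu>)"
  show "\<forall>y\<in>\<mu>. Bseq (\<lambda>n. \<Sum>k\<le>n. Arow r s t lam a n k * y k)"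
  proof
    fix y assume y: "y \<in> \<mu>"
    define x where "x = Dop r s t (Lam lam y)"
    have wx: "What r s t lam x = y" unfolding x_def What_Dop[OF r] ..
    then have "x \<in> lam_space r s t lam \<mu>" using y by (simp add: lam_space_def)
    then have "Bseq (\<lambda>n. \<Sum>k\<le>n. a k * x k)" using a by (simp add: gamma_dual_def)
    moreover have "(\<lambda>n. \<Sum>k\<le>n. a k * x k) = (\<lambda>n. \<Sum>k\<le>n. Arow r s t lam a n k * y k)"
      by (rule ext, subst key[OF r, where s=s and t=t], simp add: wx)
    ultimately show "Bseq (\<lambda>n. \<Sum>k\<le>n. Arow r s t lam a n k * y k)" by simp
  qed
next
  fix a assume a: "\<forall>y\<in>\<mu>. Bseq (\<lambda>n. \<Sum>k\<le>n. Arow r s t lam a n k * y k)"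
  show "a \<in> gamma_dual (lam_space r s t lam \<mu>)"
    unfolding gamma_dual_def lam_space_def
  proof (intro CollectI ballI)
    fix x assume "x \<in> {x. What r s t lam x \<in> \<mu>}"
    then have "Bseq (\<lambda>n. \<Sum>k\<le>n. Arow r s t lam a n k * What r s t lam x k)" using a by auto
    moreover have "(\<lambda>n. \<Sum>k\<le>n. a k * x k) = (\<lambda>n. \<Sum>k\<le>n. Arow r s t lam a n k * What r s t lam x k)"
      by (rule ext, subst key[OF r, where s=s and t=t], simp)
    ultimately show "Bseq (\<lambda>n. \<Sum>k\<le>n. a k * x k)" by simp
  qed
qed

end


definition rowbd :: "real \<Rightarrow> (nat \<Rightarrow> nat \<Rightarrow> complex) \<Rightarrow> bool" where
  "rowbd q A \<longleftrightarrow> bdd_above (range (\<lambda>n. \<Sum>k\<le>n. norm (A n k) powr q))"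

lemma suff_inf:
  assumes "rowbd 1 A" "Bseq y"
  shows "Bseq (\<lambda>n. \<Sum>k\<le>n. A n k * y k)"
proof -
  obtain M where M: "\<And>n. (\<Sum>k\<le>n. norm (A n k) powr 1) \<le> M"
    using assms(1) unfolding rowbd_def bdd_above_def by auto
  obtain K where K: "K > 0" "\<And>n. norm (y n) \<le> K" using assms(2) unfolding Bseq_def by auto
  show ?thesis
  proof (rule BseqI')
    fix n
    have "norm (\<Sum>k\<le>n. A n k * y k) \<le> (\<Sum>k\<le>n. norm (A n k) * norm (y k))"
      by (rule order_trans[OF norm_sum]) (simp add: norm_mult)
    also have "\<dots> \<le> (\<Sum>k\<le>n. norm (A n k) * K)"
      by (rule sum_mono) (simp add: K(2) mult_left_mono)
    also have "\<dots> = (\<Sum>k\<le>n. norm (A n k) powr 1) * K"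
      by (simp add: sum_distrib_right)
    also have "\<dots> \<le> M * K" using M[of n] K(1) by (simp add: mult_right_mono)
    finally show "norm (\<Sum>k\<le>n. A n k * y k) \<le> M * K" .
  qed
qed

lemma conj_q: fixes p q :: real assumes "1 < p" "1/p + 1/q = 1" shows "1 < q"
proof -
  have "1/q = 1 - 1/p" using assms by simp
  moreover have "0 < 1/p" "1/p < 1" using assms by auto
  ultimately have "0 < 1/q" "1/q < 1" by auto
  then have "q > 0" by simp
  then show ?thesis using \<open>1/q < 1\<close> by (simp add: divide_less_eq)
qed

lemma suff_p:
  assumes p: "1 < p" "1/p + 1/q = 1" and A: "rowbd q A"
    and y: "summable (\<lambda>n. norm (y n) powr p)"
  shows "Bseq (\<lambda>n. \<Sum>k\<le>n. A n k * y k)"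
proof -
  have q: "1 < q" using conj_q[OF p] .
  obtain M where M: "\<And>n. (\<Sum>k\<le>n. norm (A n k) powr q) \<le> M"
    using A unfolding rowbd_def bdd_above_def by auto
  define Y where "Y = suminf (\<lambda>n. norm (y n) powr p)"
  have Y: "(\<Sum>k\<le>n. norm (y k) powr p) \<le> Y" for n
    unfolding Y_def by (rule sum_le_suminf[OF y]) auto
  show ?thesis
  proof (rule BseqI')
    fix n
    have "norm (\<Sum>k\<le>n. A n k * y k) \<le> (\<Sum>k\<le>n. norm (A n k) * norm (y k))"
      by (rule order_trans[OF norm_sum]) (simp add: norm_mult)
    also have "\<dots> \<le> (\<Sum>k\<le>n. norm (A n k) powr q / q + norm (y k) powr p / p)"
      by (rule sum_mono) (use Youngs_inequality[of q p "norm (A n _)" "norm (y _)"] q p in auto)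
    also have "\<dots> = (\<Sum>k\<le>n. norm (A n k) powr q) / q + (\<Sum>k\<le>n. norm (y k) powr p) / p"
      by (simp add: sum.distrib sum_divide_distrib)
    also have "\<dots> \<le> M / q + Y / p"
      using M[of n] Y[of n] p q by (intro add_mono divide_right_mono) auto
    finally show "norm (\<Sum>k\<le>n. A n k * y k) \<le> M / q + Y / p" .
  qed
qed

definition ek :: "nat \<Rightarrow> nat \<Rightarrow> complex" where "ek k j = (if j = k then 1 else 0)"

lemma col_bd:
  assumes low: "\<And>n k. n < k \<Longrightarrow> A n k = 0"
    and B: "Bseq (\<lambda>n. \<Sum>j\<le>n. A n j * ek k j)"
  shows "\<exists>C. \<forall>n. norm (A n k) \<le> C"
proof -
  have e: "(\<Sum>j\<le>n. A n j * ek k j) = A n k" for n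
  proof (cases "k \<le> n")
    case True then show ?thesis by (simp add: ek_def if_distrib cong: if_cong)
  next
    case False then show ?thesis using low[of n k] by (simp add: ek_def)
  qed
  show ?thesis using B unfolding e Bseq_def by auto
qed

definition blk :: "(nat \<Rightarrow> nat) \<Rightarrow> nat \<Rightarrow> nat" where
  "blk N k = (LEAST i. k \<le> N (Suc i))"

lemma blk:
  assumes N: "strict_mono N" "N 0 = 0" and k: "0 < k"
  shows "N (blk N k) < k \<and> k \<le> N (Suc (blk N k))"
proof -
  have ex: "k \<le> N (Suc k)" using seq_suble[OF N(1), of "Suc k"] by simp
  have 1: "k \<le> N (Suc (blk N k))" unfolding blk_def by (rule LeastI[of _ k]) (rule ex)
  have 2: "N (blk N k) < k"
  proof (cases "blk N k")
    case 0 then show ?thesis using N k by simp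
  next
    case (Suc j)
    have "j < blk N k" using Suc by simp
    then have "\<not> k \<le> N (Suc j)" unfolding blk_def by (rule not_less_Least)
    then show ?thesis using Suc by simp
  qed
  show ?thesis using 1 2 by simp
qed

lemma blk_eq:
  assumes N: "strict_mono N" and k: "N i < k" "k \<le> N (Suc i)"
  shows "blk N k = i"
  unfolding blk_def
proof (rule Least_equality)
  show "k \<le> N (Suc i)" by fact
next
  fix j assume j: "k \<le> N (Suc j)"
  show "i \<le> j"
  proof (rule ccontr)
    assume "\<not> i \<le> j"
    then have "Suc j \<le> i" by simp
    then have "N (Suc j) \<le> N i" using N by (simp add: strict_mono_less_eq)
    then show False using j k by simp
  qed
qed

definition phi :: "real \<Rightarrow> complex \<Rightarrow> complex" where
  "phi q w = (if w = 0 then 0 else cnj w / complex_of_real (norm w) * complex_of_real (norm w powr (q - 1)))"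

lemma phi_mult: "w * phi q w = complex_of_real (norm w powr q)"
proof (cases "w = 0")
  case False
  have n: "norm w > 0" using False by simp
  have "w * phi q w = (w * cnj w) / complex_of_real (norm w) * complex_of_real (norm w powr (q - 1))"
    using False by (simp add: phi_def)
  also have "w * cnj w = complex_of_real (norm w) ^ 2" by (metis complex_norm_square of_real_power)
  also have "complex_of_real (norm w) ^ 2 / complex_of_real (norm w) * complex_of_real (norm w powr (q - 1))
     = complex_of_real (norm w * norm w powr (q - 1))"
    using n by (simp add: power2_eq_square)
  also have "norm w * norm w powr (q - 1) = norm w powr q"
    using n by (simp add: powr_diff)
  finally show ?thesis .
qed (simp add: phi_def)

lemma norm_phi: "norm (phi q w) = norm w powr (q - 1)"
  by (cases "w = 0") (simp_all add: phi_def norm_mult norm_divide)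

definition hy :: "(nat \<Rightarrow> nat \<Rightarrow> complex) \<Rightarrow> real \<Rightarrow> (nat \<Rightarrow> real \<Rightarrow> real) \<Rightarrow> (nat \<Rightarrow> nat) \<Rightarrow> (nat \<Rightarrow> real) \<Rightarrow> nat \<Rightarrow> complex" where
  "hy A q c N S k = (if k = 0 then 0 else
     complex_of_real (c (blk N k) (S (blk N k))) * phi q (A (N (Suc (blk N k))) k))"

lemma sum_split_at:
  assumes "(a::nat) \<le> b"
  shows "(\<Sum>k\<le>b. f k) = (\<Sum>k\<le>a. f k) + (\<Sum>k\<in>{a<..b}. (f k :: 'a::comm_monoid_add))"
proof -
  have "{..b} = {..a} \<union> {a<..b}" using assms by auto
  then show ?thesis by (simp only:) (rule sum.union_disjoint, auto)
qed

lemma hump: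
  fixes A :: "nat \<Rightarrow> nat \<Rightarrow> complex" and c :: "nat \<Rightarrow> real \<Rightarrow> real" and C :: "nat \<Rightarrow> real"
  assumes q: "1 \<le> q"
    and col: "\<And>n k. norm (A n k) \<le> C k"
    and unb: "\<not> rowbd q A"
    and cpos: "\<And>i S. 1 \<le> S \<Longrightarrow> 0 \<le> c i S"
    and cle: "\<And>i S. 1 \<le> S \<Longrightarrow> c i S * S powr ((q - 1) / q) \<le> 1"
    and cgrow: "\<And>i B. \<exists>G\<ge>1. \<forall>S\<ge>G. B \<le> c i S * S"
  shows "\<exists>N S. strict_mono N \<and> N 0 = 0 \<and> (\<forall>i. 1 \<le> S i) \<and>
     (\<forall>i. S i = (\<Sum>k\<in>{N i<..N (Suc i)}. norm (A (N (Suc i)) k) powr q)) \<and>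
     \<not> Bseq (\<lambda>n. \<Sum>k\<le>n. A n k * hy A q c N S k)"
proof -
  have "\<forall>pr. \<exists>G. 1 \<le> G \<and> (\<forall>S\<ge>G. snd pr \<le> c (fst pr) S * S)" using cgrow by blast
  from choice[OF this] obtain G0 where G0: "\<forall>pr. 1 \<le> G0 pr \<and> (\<forall>S\<ge>G0 pr. snd pr \<le> c (fst pr) S * S)"
    by blast
  define G where "G i B = G0 (i, B)" for i B
  have G1: "\<And>i B. 1 \<le> G i B" and G2: "\<And>i B S. G i B \<le> S \<Longrightarrow> B \<le> c i S * S"
    using G0 unfolding G_def by force+
  define M where "M m = (\<Sum>k\<le>m. C k)" for m
  define Mq where "Mq m = (\<Sum>k\<le>m. C k powr q)" for m
  have C0: "0 \<le> C k" for k using col[of 0 k] norm_ge_zero order_trans by blast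
  have Mq: "(\<Sum>k\<le>m. norm (A n k) powr q) \<le> Mq m" for n m
    unfolding Mq_def using q by (intro sum_mono powr_mono2) (auto simp: col)
  have ex: "\<exists>n. m < n \<and> G i (real i + M m) \<le> (\<Sum>k\<in>{m<..n}. norm (A n k) powr q)" for i m
  proof -
    have "\<exists>n. G i (real i + M m) + Mq m < (\<Sum>k\<le>n. norm (A n k) powr q)"
      using unb unfolding rowbd_def by (metis (no_types, lifting) bdd_aboveI2 not_le)
    then obtain n where n: "G i (real i + M m) + Mq m < (\<Sum>k\<le>n. norm (A n k) powr q)" by blast
    have mn: "m < n"
    proof (rule ccontr)
      assume "\<not> m < n"
      then have "(\<Sum>k\<le>n. norm (A n k) powr q) \<le> (\<Sum>k\<le>m. norm (A n k) powr q)"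
        by (intro sum_mono2) auto
      also have "\<dots> \<le> Mq m" by (rule Mq)
      finally show False using n G1[of i "real i + M m"] by linarith
    qed
    have "(\<Sum>k\<le>n. norm (A n k) powr q) = (\<Sum>k\<le>m. norm (A n k) powr q) + (\<Sum>k\<in>{m<..n}. norm (A n k) powr q)"
      using mn by (intro sum_split_at) simp
    then show ?thesis using mn n Mq[of n m] by (intro exI[of _ n]) linarith
  qed
  have "\<forall>pr. \<exists>n. snd pr < n \<and> G (fst pr) (real (fst pr) + M (snd pr)) \<le> (\<Sum>k\<in>{snd pr<..n}. norm (A n k) powr q)"
    using ex by blast
  from choice[OF this] obtain Nx0 where Nx0: "\<forall>pr. snd pr < Nx0 pr \<and> G (fst pr) (real (fst pr) + M (snd pr)) \<le> (\<Sum>k\<in>{snd pr<..Nx0 pr}. norm (A (Nx0 pr) k) powr q)"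
    by blast
  define Nx where "Nx i m = Nx0 (i, m)" for i m
  have Nx1: "\<And>i m. m < Nx i m"
    and Nx2: "\<And>i m. G i (real i + M m) \<le> (\<Sum>k\<in>{m<..Nx i m}. norm (A (Nx i m) k) powr q)"
    using Nx0 unfolding Nx_def by force+
  define N where "N = rec_nat 0 (\<lambda>i m. Nx i m)"
  have N0: "N 0 = 0" and NS: "\<And>i. N (Suc i) = Nx i (N i)" by (simp_all add: N_def)
  have smN: "strict_mono N" unfolding strict_mono_Suc_iff NS using Nx1 by simp
  define S where "S i = (\<Sum>k\<in>{N i<..N (Suc i)}. norm (A (N (Suc i)) k) powr q)" for i
  have SG: "G i (real i + M (N i)) \<le> S i" for i unfolding S_def NS by (rule Nx2)
  have S1: "1 \<le> S i" for i using SG[of i] G1[of i] by (meson order_trans)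
  define y where "y = hy A q c N S"
  have yblk: "y k = complex_of_real (c i (S i)) * phi q (A (N (Suc i)) k)"
    if "N i < k" "k \<le> N (Suc i)" for i k
  proof -
    have "k \<noteq> 0" using that by auto
    then show ?thesis using blk_eq[OF smN that] by (simp add: y_def hy_def)
  qed
  have inblk: "norm (A (N (Suc i)) k) powr q \<le> S i" if "N i < k" "k \<le> N (Suc i)" for i k
    unfolding S_def by (rule member_le_sum) (use that in auto)
  have ybd: "norm (y k) \<le> 1" for k
  proof (cases "k = 0")
    case True then show ?thesis by (simp add: y_def hy_def)
  next
    case False
    define i where "i = blk N k"
    have b: "N i < k" "k \<le> N (Suc i)" using blk[OF smN N0, of k] False unfolding i_def by auto
    define w where "w = A (N (Suc i)) k"
    have "norm (y k) = c i (S i) * norm w powr (q - 1)"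
      unfolding yblk[OF b] w_def using cpos[OF S1[of i]] by (simp add: norm_mult norm_phi)
    also have "norm w powr (q - 1) = (norm w powr q) powr ((q - 1) / q)"
      using q by (simp add: powr_powr)
    also have "\<dots> \<le> S i powr ((q - 1) / q)"
      using inblk[OF b] q unfolding w_def by (intro powr_mono2) auto
    then have "c i (S i) * (norm w powr q) powr ((q - 1) / q) \<le> c i (S i) * S i powr ((q - 1) / q)"
      using cpos[OF S1[of i]] by (rule mult_left_mono)
    also have "\<dots> \<le> 1" using cle[OF S1[of i]] .
    finally show ?thesis by simp
  qed
  have firstbd: "norm (\<Sum>k\<le>m. A n k * y k) \<le> M m" for n m
  proof -
    have "norm (\<Sum>k\<le>m. A n k * y k) \<le> (\<Sum>k\<le>m. norm (A n k) * norm (y k))"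
      by (rule order_trans[OF norm_sum]) (simp add: norm_mult)
    also have "\<dots> \<le> (\<Sum>k\<le>m. C k * 1)"
      by (intro sum_mono mult_mono) (auto simp: col ybd C0)
    finally show ?thesis by (simp add: M_def)
  qed
  have rowval: "(\<Sum>k\<le>N (Suc i). A (N (Suc i)) k * y k) =
      (\<Sum>k\<le>N i. A (N (Suc i)) k * y k) + complex_of_real (c i (S i) * S i)" for i
  proof -
    have le: "N i \<le> N (Suc i)" using smN by (simp add: strict_mono_less_eq)
    have "(\<Sum>k\<in>{N i<..N (Suc i)}. A (N (Suc i)) k * y k)
       = (\<Sum>k\<in>{N i<..N (Suc i)}. complex_of_real (c i (S i)) * complex_of_real (norm (A (N (Suc i)) k) powr q))"
    proof (rule sum.cong[OF refl])
      fix k assume "k \<in> {N i<..N (Suc i)}"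
      then have b: "N i < k" "k \<le> N (Suc i)" by auto
      show "A (N (Suc i)) k * y k = complex_of_real (c i (S i)) * complex_of_real (norm (A (N (Suc i)) k) powr q)"
        unfolding yblk[OF b] phi_mult[symmetric] by (simp add: algebra_simps)
    qed
    also have "\<dots> = complex_of_real (c i (S i) * S i)"
      by (simp add: S_def sum_distrib_left)
    finally show ?thesis using sum_split_at[OF le, of "\<lambda>k. A (N (Suc i)) k * y k"] by simp
  qed
  have big: "real i \<le> norm (\<Sum>k\<le>N (Suc i). A (N (Suc i)) k * y k)" for i
  proof -
    define F where "F = (\<Sum>k\<le>N i. A (N (Suc i)) k * y k)"
    define X where "X = c i (S i) * S i"
    have X: "real i + M (N i) \<le> X" unfolding X_def by (rule G2[OF SG])
    have X0: "0 \<le> X" using cpos[OF S1[of i]] S1[of i] unfolding X_def by simp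
    have "norm (complex_of_real X) \<le> norm (F + complex_of_real X) + norm F"
      using norm_triangle_ineq4[of "F + complex_of_real X" F] by simp
    then have "X \<le> norm (F + complex_of_real X) + M (N i)"
      using firstbd[of "N (Suc i)" "N i"] X0 unfolding F_def by simp
    then show ?thesis unfolding rowval F_def[symmetric] X_def[symmetric] using X by linarith
  qed
  have nb: "\<not> Bseq (\<lambda>n. \<Sum>k\<le>n. A n k * y k)"
  proof
    assume "Bseq (\<lambda>n. \<Sum>k\<le>n. A n k * y k)"
    then obtain K where K: "\<And>n. norm (\<Sum>k\<le>n. A n k * y k) \<le> K" unfolding Bseq_def by auto
    obtain i where "K < real i" using reals_Archimedean2 by blast
    then show False using big[of i] K[of "N (Suc i)"] by linarith
  qed
  have Sd: "\<forall>i. S i = (\<Sum>k\<in>{N i<..N (Suc i)}. norm (A (N (Suc i)) k) powr q)" by (simp add: S_def)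
  show ?thesis
    apply (rule exI[of _ N], rule exI[of _ S])
    using smN N0 S1 nb Sd unfolding y_def by blast
qed

lemma col_all:
  assumes low: "\<And>n k. n < k \<Longrightarrow> A n k = 0"
    and H: "\<forall>y\<in>X. Bseq (\<lambda>n. \<Sum>k\<le>n. A n k * y k)"
    and e: "\<And>k. ek k \<in> X"
  obtains C where "\<And>n k. norm (A n k) \<le> C k"
proof -
  have "\<forall>k. \<exists>C. \<forall>n. norm (A n k) \<le> C"
  proof
    fix k show "\<exists>C. \<forall>n. norm (A n k) \<le> C"
      by (rule col_bd[where A=A]) (use low H e in auto)
  qed
  from choice[OF this] obtain C where "\<forall>k n. norm (A n k) \<le> C k" by blast
  then show ?thesis using that by blast
qed

lemma blk_ge:
  assumes N: "strict_mono N" "N 0 = 0" and k: "N I < k"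
  shows "I \<le> blk N k"
proof (rule ccontr)
  assume "\<not> I \<le> blk N k"
  then have "Suc (blk N k) \<le> I" by simp
  then have "N (Suc (blk N k)) \<le> N I" using N by (simp add: strict_mono_less_eq)
  moreover have "k \<le> N (Suc (blk N k))" using blk[OF N, of k] k by auto
  ultimately show False using k by simp
qed

lemma nec_c0:
  assumes low: "\<And>n k. n < k \<Longrightarrow> A n k = 0"
    and H: "\<forall>y\<in>c0_seq. Bseq (\<lambda>n. \<Sum>k\<le>n. A n k * y k)"
  shows "rowbd 1 A"
proof (rule ccontr)
  assume unb: "\<not> rowbd 1 A"
  have e: "ek k \<in> c0_seq" for k
  proof -
    have "eventually (\<lambda>j. ek k j = 0) sequentially"
      unfolding eventually_sequentially by (rule exI[of _ "Suc k"]) (simp add: ek_def)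
    then show ?thesis unfolding c0_seq_def by (simp add: tendsto_eventually)
  qed
  obtain C where col: "\<And>n k. norm (A n k) \<le> C k" using col_all[OF low H e] by blast
  define c :: "nat \<Rightarrow> real \<Rightarrow> real" where "c i S = (1/2)^i" for i S
  have cgrow: "\<exists>G\<ge>1. \<forall>S\<ge>G. B \<le> c i S * S" for i B
  proof (intro exI[of _ "max 1 (2^i * B)"] conjI allI impI)
    fix S assume "max 1 (2^i * B) \<le> S"
    then have "2^i * B \<le> S" by simp
    then have "(1/2)^i * (2^i * B) \<le> (1/2)^i * S" by (intro mult_left_mono) auto
    then show "B \<le> c i S * S" by (simp add: c_def power_one_over field_simps)
  qed simp
  have "\<exists>N S. strict_mono N \<and> N 0 = 0 \<and> (\<forall>i. 1 \<le> S i) \<and>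
     (\<forall>i. S i = (\<Sum>k\<in>{N i<..N (Suc i)}. norm (A (N (Suc i)) k) powr 1)) \<and>
     \<not> Bseq (\<lambda>n. \<Sum>k\<le>n. A n k * hy A 1 c N S k)"
    by (rule hump[of 1 A C c, OF _ col unb _ _ cgrow]) (auto simp: c_def power_le_one)
  then obtain N S where N: "strict_mono N" "N 0 = 0" and S1: "\<forall>i. 1 \<le> S i"
    and nb: "\<not> Bseq (\<lambda>n. \<Sum>k\<le>n. A n k * hy A 1 c N S k)" by blast
  have ybd: "norm (hy A 1 c N S k) \<le> (1/2) ^ blk N k" for k
    by (simp add: hy_def c_def norm_mult norm_phi norm_power)
  have "hy A 1 c N S \<in> c0_seq"
    unfolding c0_seq_def
  proof (rule CollectI, rule LIMSEQ_I)
    fix r :: real assume r: "0 < r"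
    obtain I where I: "(1/2::real)^I < r" using real_arch_pow_inv[OF r, of "1/2"] by auto
    show "\<exists>no. \<forall>n\<ge>no. norm (hy A 1 c N S n - 0) < r"
    proof (intro exI allI impI)
      fix n assume "Suc (N I) \<le> n"
      then have "I \<le> blk N n" by (intro blk_ge[OF N]) simp
      then have "(1/2::real) ^ blk N n \<le> (1/2)^I" by (intro power_decreasing) auto
      moreover note ybd[of n] I
      ultimately have "norm (hy A 1 c N S n) < r" by linarith
      then show "norm (hy A 1 c N S n - 0) < r" by simp
    qed
  qed
  then show False using H nb by blast
qed

lemma nec_lp:
  fixes p q :: real
  assumes p: "1 < p" "1/p + 1/q = 1"
    and low: "\<And>n k. n < k \<Longrightarrow> A n k = 0"
    and H: "\<forall>y\<in>lp_seq p. Bseq (\<lambda>n. \<Sum>k\<le>n. A n k * y k)"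
  shows "rowbd q A"
proof (rule ccontr)
  assume unb: "\<not> rowbd q A"
  have q: "1 < q" using conj_q[OF p] .
  have pq1: "(q - 1) / q = 1 / p" using p q by (simp add: field_simps)
  have pq2: "(q - 1) * p = q" using p q by (simp add: field_simps)
  have pq3: "1 - 1 / p = 1 / q" using p by simp
  have e: "ek k \<in> lp_seq p" for k
    unfolding lp_seq_def by (rule CollectI, rule summable_finite[of "{k}"]) (auto simp: ek_def)
  obtain C where col: "\<And>n k. norm (A n k) \<le> C k" using col_all[OF low H e] by blast
  define c :: "nat \<Rightarrow> real \<Rightarrow> real" where "c i S = (1/2)^i / S powr (1/p)" for i S
  have cpos: "0 \<le> c i S" for i S by (simp add: c_def)
  have cle: "c i S * S powr ((q - 1) / q) \<le> 1" if "1 \<le> S" for i S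
  proof -
    have "S powr (1/p) > 0" using that by simp
    then have "c i S * S powr ((q - 1) / q) = (1/2)^i" unfolding pq1 c_def by simp
    also have "\<dots> \<le> 1" by (simp add: power_le_one)
    finally show ?thesis .
  qed
  have cgrow: "\<exists>G\<ge>1. \<forall>S\<ge>G. B \<le> c i S * S" for i B
  proof (intro exI[of _ "max 1 ((2^i * max B 0) powr q)"] conjI allI impI)
    fix S assume S: "max 1 ((2^i * max B 0) powr q) \<le> S"
    then have S0: "0 < S" by simp
    have "2^i * max B 0 = ((2^i * max B 0) powr q) powr (1/q)"
      using q by (simp add: powr_powr)
    also have "\<dots> \<le> S powr (1/q)" using S q by (intro powr_mono2) auto
    finally have h: "2^i * max B 0 \<le> S powr (1/q)" .
    have "c i S * S = (1/2)^i * (S powr 1 / S powr (1/p))" using S0 by (simp add: c_def)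
    also have "S powr 1 / S powr (1/p) = S powr (1/q)" by (subst powr_diff[symmetric]) (simp only: pq3)
    finally have "c i S * S = (1/2)^i * S powr (1/q)" .
    moreover have "(1/2)^i * (2^i * max B 0) \<le> (1/2::real)^i * S powr (1/q)"
      using h by (intro mult_left_mono) auto
    moreover have "(1/2::real)^i * (2^i * max B 0) = max B 0" by (simp add: power_one_over)
    ultimately show "B \<le> c i S * S" by linarith
  qed simp
  have "\<exists>N S. strict_mono N \<and> N 0 = 0 \<and> (\<forall>i. 1 \<le> S i) \<and>
     (\<forall>i. S i = (\<Sum>k\<in>{N i<..N (Suc i)}. norm (A (N (Suc i)) k) powr q)) \<and>
     \<not> Bseq (\<lambda>n. \<Sum>k\<le>n. A n k * hy A q c N S k)"
    by (rule hump[of q A C c, OF _ col unb _ cle cgrow]) (use q cpos in auto)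
  then obtain N S where N: "strict_mono N" "N 0 = 0" and S1: "\<And>i. 1 \<le> S i"
    and Sdef: "\<And>i. S i = (\<Sum>k\<in>{N i<..N (Suc i)}. norm (A (N (Suc i)) k) powr q)"
    and nb: "\<not> Bseq (\<lambda>n. \<Sum>k\<le>n. A n k * hy A q c N S k)" by blast
  define y where "y = hy A q c N S"
  have blocksum: "(\<Sum>k\<in>{N i<..N (Suc i)}. norm (y k) powr p) \<le> (1/2)^i" for i
  proof -
    have S0: "0 < S i" using S1[of i] by simp
    have "(\<Sum>k\<in>{N i<..N (Suc i)}. norm (y k) powr p)
        = (\<Sum>k\<in>{N i<..N (Suc i)}. c i (S i) powr p * norm (A (N (Suc i)) k) powr q)"
    proof (rule sum.cong[OF refl])
      fix k assume "k \<in> {N i<..N (Suc i)}"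
      then have b: "N i < k" "k \<le> N (Suc i)" by auto
      have bi: "blk N k = i" by (rule blk_eq[OF N(1) b])
      have k0: "k \<noteq> 0" using b by auto
      have "norm (y k) = c i (S i) * norm (A (N (Suc i)) k) powr (q - 1)"
        unfolding y_def hy_def bi using k0 cpos[of i "S i"] by (simp add: norm_mult norm_phi)
      then show "norm (y k) powr p = c i (S i) powr p * norm (A (N (Suc i)) k) powr q"
        by (simp add: powr_mult powr_powr pq2)
    qed
    also have "\<dots> = c i (S i) powr p * S i" by (simp add: Sdef sum_distrib_left)
    also have "c i (S i) powr p = ((1/2)^i) powr p / S i"
      unfolding c_def using S0 p by (simp add: powr_divide powr_powr)
    also have "((1/2::real)^i) powr p / S i * S i = ((1/2)^i) powr p" using S0 by simp
    also have "\<dots> \<le> (1/2)^i" using p by (intro powr_le_one_le) (auto simp: power_le_one)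
    finally show ?thesis .
  qed
  have partial: "(\<Sum>k\<le>N m. norm (y k) powr p) \<le> 2 - 2 * (1/2)^m" for m
  proof (induction m)
    case 0 then show ?case using N(2) by (simp add: y_def hy_def)
  next
    case (Suc m)
    have le: "N m \<le> N (Suc m)" using N(1) by (simp add: strict_mono_less_eq)
    show ?case unfolding sum_split_at[OF le] using Suc blocksum[of m] by simp
  qed
  have "summable (\<lambda>k. norm (y k) powr p)"
  proof (rule bounded_imp_summable)
    fix n
    have "(\<Sum>k\<le>n. norm (y k) powr p) \<le> (\<Sum>k\<le>N n. norm (y k) powr p)"
      using seq_suble[OF N(1), of n] by (intro sum_mono2) auto
    also have "\<dots> \<le> 2" using partial[of n] by (smt (verit) zero_le_power zero_le_divide_iff)
    finally show "(\<Sum>k\<le>n. norm (y k) powr p) \<le> 2" .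
  qed simp
  then have "y \<in> lp_seq p" by (simp add: lp_seq_def)
  then show False using H nb unfolding y_def by blast
qed


lemma rowbd_iff:
  assumes q: "0 < q"
  shows "rowbd q (Arow r s t lam a) \<longleftrightarrow> a \<in> f3 r s t lam q \<inter> f4 r lam"
proof -
  define D where "D n = complex_of_real (1 / r * (lam n / (lam n - lam_prev lam n))) * a n" for n
  have split: "(\<Sum>k\<le>n. norm (Arow r s t lam a n k) powr q)
      = (\<Sum>k<n. norm (ghat r s t lam a k n) powr q) + norm (D n) powr q" for n
  proof -
    have "(\<Sum>k\<le>n. norm (Arow r s t lam a n k) powr q)
       = (\<Sum>k<n. norm (Arow r s t lam a n k) powr q) + norm (Arow r s t lam a n n) powr q"
      by (simp add: lessThan_Suc_atMost[symmetric] sum.lessThan_Suc)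
    moreover have "(\<Sum>k<n. norm (Arow r s t lam a n k) powr q) = (\<Sum>k<n. norm (ghat r s t lam a k n) powr q)"
      by (rule sum.cong) (auto simp: Arow_def)
    ultimately show ?thesis by (simp add: Arow_def D_def)
  qed
  show ?thesis
  proof
    assume "rowbd q (Arow r s t lam a)"
    then obtain M where M: "\<And>n. (\<Sum>k\<le>n. norm (Arow r s t lam a n k) powr q) \<le> M"
      unfolding rowbd_def bdd_above_def by auto
    have M3: "(\<Sum>k<n. norm (ghat r s t lam a k n) powr q) \<le> M" for n
      using M[of n] unfolding split by (smt (verit) powr_ge_zero)
    have M4: "norm (D n) powr q \<le> M" for n
      using M[of n] unfolding split by (smt (verit) powr_ge_zero sum_nonneg)
    have "norm (D n) \<le> M powr (1/q)" for n
    proof -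
      have "norm (D n) = (norm (D n) powr q) powr (1/q)" using q by (simp add: powr_powr)
      also have "\<dots> \<le> M powr (1/q)" using M4[of n] q by (intro powr_mono2) auto
      finally show ?thesis .
    qed
    then have "Bseq D" by (rule BseqI')
    moreover have "bdd_above (range (\<lambda>n. \<Sum>k<n. norm (ghat r s t lam a k n) powr q))"
      using M3 by (intro bdd_aboveI2) auto
    ultimately show "a \<in> f3 r s t lam q \<inter> f4 r lam"
      unfolding f3_def f4_def D_def by simp
  next
    assume "a \<in> f3 r s t lam q \<inter> f4 r lam"
    then have B3: "bdd_above (range (\<lambda>n. \<Sum>k<n. norm (ghat r s t lam a k n) powr q))" and B4: "Bseq D"
      unfolding f3_def f4_def D_def by auto
    obtain M where M: "\<And>n. (\<Sum>k<n. norm (ghat r s t lam a k n) powr q) \<le> M"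
      using B3 unfolding bdd_above_def by auto
    obtain K where K: "\<And>n. norm (D n) \<le> K" using B4 unfolding Bseq_def by auto
    have "(\<Sum>k\<le>n. norm (Arow r s t lam a n k) powr q) \<le> M + K powr q" for n
      unfolding split using M[of n] powr_mono2[of q "norm (D n)" K] K[of n] q by simp
    then show "rowbd q (Arow r s t lam a)" unfolding rowbd_def by (intro bdd_aboveI2) auto
  qed
qed

lemma Arow_low: "n < k \<Longrightarrow> Arow r s t lam a n k = 0" by (simp add: Arow_def)

lemma c0_c: "c0_seq \<subseteq> c_seq" by (auto simp: c0_seq_def c_seq_def convergent_def)
lemma c_linf: "c_seq \<subseteq> linf_seq" by (auto simp: c_seq_def linf_seq_def convergent_imp_Bseq)

lemma mat_inf:
  assumes "c0_seq \<subseteq> \<mu>" "\<mu> \<subseteq> linf_seq"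
  shows "{a. \<forall>y\<in>\<mu>. Bseq (\<lambda>n. \<Sum>k\<le>n. Arow r s t lam a n k * y k)} = {a. rowbd 1 (Arow r s t lam a)}"
proof (intro set_eqI iffI; simp)
  fix a assume "\<forall>y\<in>\<mu>. Bseq (\<lambda>n. \<Sum>k\<le>n. Arow r s t lam a n k * y k)"
  then have "\<forall>y\<in>c0_seq. Bseq (\<lambda>n. \<Sum>k\<le>n. Arow r s t lam a n k * y k)" using assms(1) by blast
  moreover have "\<And>n k. n < k \<Longrightarrow> Arow r s t lam a n k = 0" by (simp add: Arow_def)
  ultimately show "rowbd 1 (Arow r s t lam a)" using nec_c0[where A="Arow r s t lam a"] by blast
next
  fix a assume "rowbd 1 (Arow r s t lam a)"
  then show "\<forall>y\<in>\<mu>. Bseq (\<lambda>n. \<Sum>k\<le>n. Arow r s t lam a n k * y k)"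
    using assms(2) suff_inf by (auto simp: linf_seq_def)
qed

lemma mat_p:
  fixes p q :: real
  assumes p: "1 < p" "1/p + 1/q = 1"
  shows "{a. \<forall>y\<in>lp_seq p. Bseq (\<lambda>n. \<Sum>k\<le>n. Arow r s t lam a n k * y k)} = {a. rowbd q (Arow r s t lam a)}"
proof (intro set_eqI iffI; simp)
  fix a assume "\<forall>y\<in>lp_seq p. Bseq (\<lambda>n. \<Sum>k\<le>n. Arow r s t lam a n k * y k)"
  moreover have "\<And>n k. n < k \<Longrightarrow> Arow r s t lam a n k = 0" by (simp add: Arow_def)
  ultimately show "rowbd q (Arow r s t lam a)" using nec_lp[OF p, where A="Arow r s t lam a"] by blast
next
  fix a assume "rowbd q (Arow r s t lam a)"
  then show "\<forall>y\<in>lp_seq p. Bseq (\<lambda>n. \<Sum>k\<le>n. Arow r s t lam a n k * y k)"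
    using suff_p[OF p] by (auto simp: lp_seq_def)
qed

theorem theorem10:
  fixes r s t :: real and lam :: "nat \<Rightarrow> real"
  assumes "r \<noteq> 0" and "s \<noteq> 0" and "t \<noteq> 0"
    and "strict_mono lam" and "\<And>k. lam k > 0"
    and "filterlim lam at_top sequentially"
  shows "gamma_dual (lam_space r s t lam c0_seq) = f3 r s t lam 1 \<inter> f4 r lam
       \<and> gamma_dual (lam_space r s t lam c_seq) = f3 r s t lam 1 \<inter> f4 r lam
       \<and> gamma_dual (lam_space r s t lam linf_seq) = f3 r s t lam 1 \<inter> f4 r lam
       \<and> (\<forall>p q. 1 < p \<and> 1/p + 1/q = 1 \<longrightarrow>
            gamma_dual (lam_space r s t lam (lp_seq p)) = f3 r s t lam q \<inter> f4 r lam)"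
proof -
  interpret lamseq lam using assms(4,5) by unfold_locales auto
  have r: "r \<noteq> 0" by fact
  have R1: "{a. rowbd 1 (Arow r s t lam a)} = f3 r s t lam 1 \<inter> f4 r lam"
    using rowbd_iff[of 1] by auto
  have A: "gamma_dual (lam_space r s t lam \<mu>) = f3 r s t lam 1 \<inter> f4 r lam"
    if "c0_seq \<subseteq> \<mu>" "\<mu> \<subseteq> linf_seq" for \<mu>
    unfolding gd[OF r] mat_inf[OF that] R1 ..
  have B: "gamma_dual (lam_space r s t lam (lp_seq p)) = f3 r s t lam q \<inter> f4 r lam"
    if "1 < p" "1/p + 1/q = 1" for p q :: real
  proof -
    have "0 < q" using conj_q[OF that] by simp
    then have "{a. rowbd q (Arow r s t lam a)} = f3 r s t lam q \<inter> f4 r lam"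
      using rowbd_iff[of q] by auto
    then show ?thesis unfolding gd[OF r] mat_p[OF that] .
  qed
  show ?thesis
    using A[of c0_seq] A[of c_seq] A[of linf_seq] B c0_c c_linf by auto
qed

end
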